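(* Let $m\ge0$ be an integer and assume (A1) and (A2) from the context. Consider the system of equations in the unknowns $\{A(j),k_i(j)\}_{N_0\le j\le N_0+m,\,1\le i\le j}$ consisting of the terminal conditions $$A(N_0+m)=\frac{1}{\beta_\Sigma(N_0+m)},\qquad k_i(N_0+m)=\frac{\beta_i(N_0+m)A(N_0+m)-1}{\alpha_i}\quad(1\le i\le N_0+m),$$ and, for $N_0\le j<N_0+m$ and $1\le i\le j$, $$\frac{1}{A(j)}=\beta_\Sigma(j)+\lambda-\Big(\alpha_\Sigma(j)\sum_{i=1}^j\frac{\lambda A(j+1)e^{-\alpha_i(k_i(j+1)-k_i(j))}}{\alpha_i}\Big)\frac{1}{A(j)},\qquad k_i(j)=\frac{(\beta_i(j)+\lambda)A(j)-1}{\alpha_i}-\frac{\lambda A(j+1)e^{-\alpha_i(k_i(j+1)-k_i(j))}}{\alpha_i}.$$ Then this system has a unique solution with $A(j)>0$ for all $N_0\le j\le N_0+m$, and this solution satisfies, for $N_0\le j\le N_0+m$ and $1\le i\le j$, $$\frac{1}{\overline{\beta}+\lambda}<A(j)\le\frac{1}{\underline{\beta}},\qquad A(j)e^{-\alpha_ik_i(j)}\le\frac{1}{\underline{\beta}},\qquad -\ln\Big(\frac{\overline{\beta}+\lambda}{\underline{\beta}}\Big)\le\alpha_ik_i(j)\le\frac{\overline{\beta}+\lambda}{\underline{\beta}}-1.$$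
   Context: $N_0\ge1$ is an integer, $\lambda>0$, and for each $i\in\mathbb{N}$, $\alpha_i>0$, $\rho_i>0$, and $\mu_i(j),\sigma_i(j)\in\mathbb{R}$ for $j\ge N_0\vee i$. Define $\alpha_\Sigma(j):=(\sum_{i=1}^j1/\alpha_i)^{-1}$, $\beta_i(j):=\rho_i+\alpha_i\mu_i(j)-\frac12\alpha_i^2\sigma_i^2(j)$, $\beta_\Sigma(j):=\alpha_\Sigma(j)\sum_{i=1}^j\beta_i(j)/\alpha_i$. Assumptions: (A1) for each $i$, $\{\mu_i(j)\}_{j\ge N_0\vee i}$ and $\{\sigma_i(j)\}_{j\ge N_0\vee i}$ are bounded; (A2) there are constants $0<\underline{\beta}\le\overline{\beta}$ with $\underline{\beta}\le\beta_i(j)\le\overline{\beta}$ for all $j\ge N_0$, $1\le i\le j$. *)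

theory Defs
  imports Complex_Main
begin

definition alpha_Sigma :: "(nat \<Rightarrow> real) \<Rightarrow> nat \<Rightarrow> real" where
  "alpha_Sigma \<alpha> j = inverse (\<Sum>i=1..j. 1 / \<alpha> i)"

definition beta :: "(nat \<Rightarrow> real) \<Rightarrow> (nat \<Rightarrow> real) \<Rightarrow> (nat \<Rightarrow> nat \<Rightarrow> real)
    \<Rightarrow> (nat \<Rightarrow> nat \<Rightarrow> real) \<Rightarrow> nat \<Rightarrow> nat \<Rightarrow> real" where
  "beta \<rho> \<alpha> \<mu> \<sigma> i j = \<rho> i + \<alpha> i * \<mu> i j - 1/2 * (\<alpha> i)^2 * (\<sigma> i j)^2"

definition beta_Sigma :: "(nat \<Rightarrow> real) \<Rightarrow> (nat \<Rightarrow> real) \<Rightarrow> (nat \<Rightarrow> nat \<Rightarrow> real)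
    \<Rightarrow> (nat \<Rightarrow> nat \<Rightarrow> real) \<Rightarrow> nat \<Rightarrow> real" where
  "beta_Sigma \<rho> \<alpha> \<mu> \<sigma> j = alpha_Sigma \<alpha> j * (\<Sum>i=1..j. beta \<rho> \<alpha> \<mu> \<sigma> i j / \<alpha> i)"

definition lemma_system ::
  "nat \<Rightarrow> nat \<Rightarrow> real \<Rightarrow> (nat \<Rightarrow> real) \<Rightarrow> (nat \<Rightarrow> real) \<Rightarrow> (nat \<Rightarrow> nat \<Rightarrow> real)
    \<Rightarrow> (nat \<Rightarrow> nat \<Rightarrow> real) \<Rightarrow> (nat \<Rightarrow> real) \<Rightarrow> (nat \<Rightarrow> nat \<Rightarrow> real) \<Rightarrow> bool" where
  "lemma_system N0 m lam \<alpha> \<rho> \<mu> \<sigma> A k \<longleftrightarrow>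
     A (N0 + m) = 1 / beta_Sigma \<rho> \<alpha> \<mu> \<sigma> (N0 + m) \<and>
     (\<forall>i\<in>{1..N0+m}. k i (N0 + m) =
        (beta \<rho> \<alpha> \<mu> \<sigma> i (N0 + m) * A (N0 + m) - 1) / \<alpha> i) \<and>
     (\<forall>j. N0 \<le> j \<and> j < N0 + m \<longrightarrow>
        1 / A j = beta_Sigma \<rho> \<alpha> \<mu> \<sigma> j + lam
          - (alpha_Sigma \<alpha> j *
              (\<Sum>i=1..j. lam * A (j+1) * exp (- \<alpha> i * (k i (j+1) - k i j)) / \<alpha> i))
            * (1 / A j)) \<and>
     (\<forall>j. N0 \<le> j \<and> j < N0 + m \<longrightarrow> (\<forall>i\<in>{1..j}.
        k i j = ((beta \<rho> \<alpha> \<mu> \<sigma> i j + lam) * A j - 1) / \<alpha> i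
          - lam * A (j+1) * exp (- \<alpha> i * (k i (j+1) - k i j)) / \<alpha> i))"

end

theory Submission
  imports Defs
begin


lemma g_le_iff:
  fixes c x y :: real
  assumes "c > 0"
  shows "x + c * exp x \<le> y + c * exp y \<longleftrightarrow> x \<le> y"
proof
  assume h: "x + c * exp x \<le> y + c * exp y"
  show "x \<le> y"
  proof (rule ccontr)
    assume "\<not> x \<le> y"
    then have "y < x" by simp
    then have "c * exp y < c * exp x" using assms by simp
    with \<open>y < x\<close> h show False by linarith
  qed
next
  assume "x \<le> y"
  then have "c * exp x \<le> c * exp y" using assms by simp
  with \<open>x \<le> y\<close> show "x + c * exp x \<le> y + c * exp y" by linarith
qed

lemma g_eq_iff:
  fixes c x y :: real
  assumes "c > 0"
  shows "x + c * exp x = y + c * exp y \<longleftrightarrow> x = y"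
  using g_le_iff[OF assms, of x y] g_le_iff[OF assms, of y x] by auto

lemma g_surj:
  fixes c a :: real
  assumes "c > 0"
  shows "\<exists>x. x + c * exp x = a"
proof -
  define x0 where "x0 = min 0 (a - c)"
  have "c * exp x0 \<le> c * exp 0" using assms unfolding x0_def by simp
  then have "x0 + c * exp x0 \<le> a" unfolding x0_def by simp
  moreover have "a \<le> a + c * exp a" using assms by simp
  moreover have "x0 \<le> a" using assms unfolding x0_def by simp
  moreover have "\<forall>x. x0 \<le> x \<and> x \<le> a \<longrightarrow> isCont (\<lambda>x. x + c * exp x) x"
    by (auto intro!: continuous_intros)
  ultimately show ?thesis using IVT[of "\<lambda>x. x + c * exp x" x0 a a] by blast
qed

definition Xf :: "real \<Rightarrow> real \<Rightarrow> real" where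
  "Xf c a = (SOME x. x + c * exp x = a)"

lemma Xf_eq: "c > 0 \<Longrightarrow> Xf c a + c * exp (Xf c a) = a"
  unfolding Xf_def by (rule someI_ex) (rule g_surj)

lemma Xf_lip:
  assumes "c > 0" "a \<le> b"
  shows "Xf c a \<le> Xf c b \<and> Xf c b - Xf c a \<le> b - a"
proof -
  let ?x = "Xf c a" and ?y = "Xf c b"
  have ex: "?x + c * exp ?x = a" and ey: "?y + c * exp ?y = b" using Xf_eq assms by auto
  have "?x \<le> ?y" using g_le_iff[OF assms(1), of ?x ?y] ex ey assms by simp
  then have "c * exp ?x \<le> c * exp ?y" using assms by simp
  with ex ey \<open>?x \<le> ?y\<close> show ?thesis by linarith
qed

lemma Xf_abs: "c > 0 \<Longrightarrow> \<bar>Xf c a - Xf c b\<bar> \<le> \<bar>a - b\<bar>"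
  using Xf_lip[of c a b] Xf_lip[of c b a] by (cases "a \<le> b") auto

lemma isCont_Xf: assumes "c > 0" shows "isCont (Xf c) a"
  unfolding isCont_def LIM_eq
proof (intro allI impI)
  fix r :: real assume "r > 0"
  show "\<exists>s>0. \<forall>x. x \<noteq> a \<and> norm (x - a) < s \<longrightarrow> norm (Xf c x - Xf c a) < r"
    using \<open>r > 0\<close> Xf_abs[OF assms] by (intro exI[of _ r]) (auto intro: le_less_trans)
qed

lemma isCont_Xf' [continuous_intros]:
  "c > 0 \<Longrightarrow> isCont f x \<Longrightarrow> isCont (\<lambda>y. Xf c (f y)) x"
  using isCont_o2[OF _ isCont_Xf] by blast

lemma step_exists:
  fixes n :: nat and al c bt :: "nat \<Rightarrow> real" and lam blo bhi :: real
  assumes n: "n \<ge> 1" and lam: "lam > 0" and blo: "blo > 0"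
    and al: "\<And>i. i \<in> {1..n} \<Longrightarrow> al i > 0"
    and c: "\<And>i. i \<in> {1..n} \<Longrightarrow> c i > 0 \<and> c i \<le> lam / blo"
    and bt: "\<And>i. i \<in> {1..n} \<Longrightarrow> blo \<le> bt i \<and> bt i \<le> bhi"
  shows "\<exists>a x. 1/(bhi+lam) \<le> a \<and> a \<le> 1/blo \<and>
     (\<forall>i\<in>{1..n}. x i + c i * exp (x i) = (bt i + lam) * a - 1) \<and> (\<Sum>i=1..n. x i / al i) = 0"
proof -
  define F where "F a = (\<Sum>i=1..n. Xf (c i) ((bt i + lam) * a - 1) / al i)" for a
  have bhi: "bhi > 0" using bt[of 1] n blo by auto
  have "F (1/(bhi+lam)) \<le> 0" unfolding F_def
  proof (rule sum_nonpos)
    fix i assume i: "i \<in> {1..n}"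
    let ?x = "Xf (c i) ((bt i + lam) * (1/(bhi+lam)) - 1)"
    have e: "?x + c i * exp ?x = (bt i + lam) * (1/(bhi+lam)) - 1" using Xf_eq c[OF i] by blast
    have "(bt i + lam) * (1/(bhi+lam)) \<le> 1" using bt[OF i] lam bhi by (simp add: field_simps)
    moreover have "c i * exp ?x > 0" using c[OF i] by simp
    ultimately have "?x \<le> 0" using e by linarith
    then show "?x / al i \<le> 0" using al[OF i] by (simp add: divide_nonpos_pos)
  qed
  moreover have "F (1/blo) \<ge> 0" unfolding F_def
  proof (rule sum_nonneg)
    fix i assume i: "i \<in> {1..n}"
    let ?x = "Xf (c i) ((bt i + lam) * (1/blo) - 1)"
    have e: "?x + c i * exp ?x = (bt i + lam) * (1/blo) - 1" using Xf_eq c[OF i] by blast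
    have "(bt i + lam) * (1/blo) - 1 = (bt i - blo)/blo + lam/blo" using blo by (simp add: field_simps)
    also have "\<dots> \<ge> 0 + c i * exp 0"
    proof -
      have "(bt i - blo)/blo \<ge> 0" using bt[OF i] blo by simp
      then show ?thesis using c[OF i] by simp
    qed
    finally have "0 \<le> ?x" using e g_le_iff[of "c i" 0 ?x] c[OF i] by simp
    then show "?x / al i \<ge> 0" using al[OF i] by simp
  qed
  moreover have "1/(bhi+lam) \<le> 1/blo" using blo bt[of 1] n lam by (simp add: frac_le)
  moreover have "\<forall>a. 1/(bhi+lam) \<le> a \<and> a \<le> 1/blo \<longrightarrow> isCont F a"
    unfolding F_def using c al by (force intro!: continuous_intros)
  ultimately obtain a where a: "1/(bhi+lam) \<le> a" "a \<le> 1/blo" "F a = 0"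
    using IVT[of F "1/(bhi+lam)" 0 "1/blo"] by blast
  show ?thesis
    apply (rule exI[of _ a], rule exI[of _ "\<lambda>i. Xf (c i) ((bt i + lam) * a - 1)"])
    using a Xf_eq c unfolding F_def by auto
qed



lemma sum_pos_ex:
  fixes f :: "nat \<Rightarrow> real"
  assumes "n \<ge> 1" "(\<Sum>i=1..n. f i) = 0"
  shows "\<exists>i\<in>{1..n}. f i \<ge> 0" "\<exists>i\<in>{1..n}. f i \<le> 0"
proof -
  show "\<exists>i\<in>{1..n}. f i \<ge> 0"
  proof (rule ccontr)
    assume "\<not> ?thesis"
    then have "(\<Sum>i=1..n. f i) < (\<Sum>i=1..n. 0)"
      using assms by (intro sum_strict_mono) (auto simp: not_le)
    with assms show False by simp
  qed
  show "\<exists>i\<in>{1..n}. f i \<le> 0"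
  proof (rule ccontr)
    assume "\<not> ?thesis"
    then have "(\<Sum>i=1..n. 0) < (\<Sum>i=1..n. f i)"
      using assms by (intro sum_strict_mono) (auto simp: not_le)
    with assms show False by simp
  qed
qed

lemma step_unique:
  fixes n :: nat and al c bt x x' :: "nat \<Rightarrow> real" and lam a a' :: real
  assumes n: "n \<ge> 1"
    and al: "\<And>i. i \<in> {1..n} \<Longrightarrow> al i > 0"
    and c: "\<And>i. i \<in> {1..n} \<Longrightarrow> c i > 0"
    and bt: "\<And>i. i \<in> {1..n} \<Longrightarrow> bt i + lam > 0"
    and ex: "\<And>i. i \<in> {1..n} \<Longrightarrow> x i + c i * exp (x i) = (bt i + lam) * a - 1"
    and ex': "\<And>i. i \<in> {1..n} \<Longrightarrow> x' i + c i * exp (x' i) = (bt i + lam) * a' - 1"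
    and s: "(\<Sum>i=1..n. x i / al i) = 0" and s': "(\<Sum>i=1..n. x' i / al i) = 0"
  shows "a = a' \<and> (\<forall>i\<in>{1..n}. x i = x' i)"
proof -
  have gen: "False" if lt: "b < b'" and
      ey: "\<And>i. i \<in> {1..n} \<Longrightarrow> y i + c i * exp (y i) = (bt i + lam) * b - 1"
      and ey': "\<And>i. i \<in> {1..n} \<Longrightarrow> y' i + c i * exp (y' i) = (bt i + lam) * b' - 1"
      and sy: "(\<Sum>i=1..n. y i / al i) = 0" and sy': "(\<Sum>i=1..n. y' i / al i) = 0"
    for b b' :: real and y y' :: "nat \<Rightarrow> real"
  proof -
    have "y i < y' i" if i: "i \<in> {1..n}" for i
    proof -
      have "(bt i + lam) * b < (bt i + lam) * b'" using lt bt[OF i] by simp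
      then have "\<not> (y' i + c i * exp (y' i) \<le> y i + c i * exp (y i))" using ey[OF i] ey'[OF i] by linarith
      then show ?thesis using g_le_iff[OF c[OF i]] by auto
    qed
    then have "(\<Sum>i=1..n. y i / al i) < (\<Sum>i=1..n. y' i / al i)"
      using n al by (intro sum_strict_mono) (auto simp: divide_strict_right_mono)
    with sy sy' show False by simp
  qed
  have "a = a'"
  proof (rule ccontr)
    assume "a \<noteq> a'"
    then consider "a < a'" | "a' < a" by linarith
    then show False
    proof cases
      case 1 then show False using gen[of a a' x x'] ex ex' s s' by blast
    next
      case 2 then show False using gen[of a' a x' x] ex ex' s s' by blast
    qed
  qed
  moreover have "\<forall>i\<in>{1..n}. x i = x' i"
    using ex ex' g_eq_iff c \<open>a = a'\<close> by metis
  ultimately show ?thesis by blast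
qed

lemma step_abound:
  fixes n :: nat and al c bt x :: "nat \<Rightarrow> real" and lam blo bhi a :: real
  assumes n: "n \<ge> 1" and lam: "lam > 0" and blo: "blo > 0" and a: "a > 0"
    and al: "\<And>i. i \<in> {1..n} \<Longrightarrow> al i > 0"
    and c: "\<And>i. i \<in> {1..n} \<Longrightarrow> c i > 0 \<and> c i \<le> lam / blo"
    and bt: "\<And>i. i \<in> {1..n} \<Longrightarrow> blo \<le> bt i \<and> bt i \<le> bhi"
    and ex: "\<And>i. i \<in> {1..n} \<Longrightarrow> x i + c i * exp (x i) = (bt i + lam) * a - 1"
    and s: "(\<Sum>i=1..n. x i / al i) = 0"
  shows "1/(bhi+lam) < a \<and> a \<le> 1/blo"
proof
  obtain i where i: "i \<in> {1..n}" "x i / al i \<ge> 0" using sum_pos_ex(1)[OF n s] by blast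
  then have "x i \<ge> 0" using al[OF i(1)] by (simp add: zero_le_divide_iff)
  moreover have "c i * exp (x i) > 0" using c[OF i(1)] by simp
  ultimately have "(bt i + lam) * a > 1" using ex[OF i(1)] by linarith
  moreover have "(bt i + lam) * a \<le> (bhi + lam) * a" using bt[OF i(1)] a by simp
  ultimately have "(bhi + lam) * a > 1" by linarith
  moreover have "bhi + lam > 0" using bt[OF i(1)] blo lam by linarith
  ultimately show "1/(bhi+lam) < a" by (simp add: field_simps)
next
  obtain i where i: "i \<in> {1..n}" "x i / al i \<le> 0" using sum_pos_ex(2)[OF n s] by blast
  then have "x i \<le> 0" using al[OF i(1)] by (simp add: divide_le_0_iff)
  then have "c i * exp (x i) \<le> c i * 1" using c[OF i(1)] by simp
  then have "(bt i + lam) * a \<le> 1 + lam / blo" using ex[OF i(1)] \<open>x i \<le> 0\<close> c[OF i(1)] by linarith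
  moreover have "(blo + lam) * a \<le> (bt i + lam) * a" using bt[OF i(1)] a by simp
  ultimately have "(blo + lam) * a \<le> 1 + lam / blo" by linarith
  also have "1 + lam / blo = (blo + lam) * (1 / blo)" using blo by (simp add: field_simps)
  finally have h: "(blo + lam) * a \<le> (blo + lam) * (1 / blo)" .
  show "a \<le> 1/blo" by (metis h add_pos_pos blo lam mult_le_cancel_left_pos)
qed

lemma step_ibound:
  fixes c bt x lam blo bhi a :: real
  assumes lam: "lam > 0" and blo: "blo > 0" and a: "a > 0" and a': "a \<le> 1/blo"
    and c: "c > 0" "c \<le> lam / blo"
    and bt: "blo \<le> bt" "bt \<le> bhi"
    and ex: "x + c * exp x = (bt + lam) * a - 1"
  shows "a * exp (- x) \<le> 1/blo \<and> x \<le> (bhi + lam)/blo - 1"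
proof
  have "(bt + lam) * a * exp (-x) = (1 + x) * exp (-x) + c"
    using ex by (simp add: algebra_simps exp_minus field_simps)
  also have "(1 + x) * exp (-x) \<le> 1"
    using exp_ge_add_one_self[of x] by (simp add: exp_minus field_simps)
  finally have "(bt + lam) * (a * exp (-x)) \<le> 1 + lam / blo" using c by (simp add: mult.assoc)
  moreover have "(blo + lam) * (a * exp (-x)) \<le> (bt + lam) * (a * exp (-x))"
    using bt a by (intro mult_right_mono) auto
  ultimately have "(blo + lam) * (a * exp (-x)) \<le> 1 + lam / blo" by linarith
  also have "1 + lam / blo = (blo + lam) * (1 / blo)" using blo by (simp add: field_simps)
  finally have h: "(blo + lam) * (a * exp (- x)) \<le> (blo + lam) * (1 / blo)" .
  show "a * exp (- x) \<le> 1/blo" by (metis h add_pos_pos blo lam mult_le_cancel_left_pos)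
next
  have "x \<le> (bt + lam) * a - 1" using ex c by (smt (verit) exp_gt_zero mult_pos_pos)
  also have "(bt + lam) * a \<le> (bhi + lam) * (1/blo)"
    using bt a a' lam blo by (intro mult_mono) auto
  finally show "x \<le> (bhi + lam)/blo - 1" by simp
qed

lemma final_bound:
  fixes lam blo bhi a x :: real
  assumes "bhi + lam > 0" "blo > 0" "1/(bhi+lam) < a" "a * exp (- x) \<le> 1/blo"
  shows "- ln ((bhi + lam) / blo) \<le> x"
proof -
  have a: "a > 0" using assms(1,3) by (smt (verit) divide_pos_pos)
  have "exp (- x) \<le> 1 / (blo * a)" using assms(4) a assms(2) by (simp add: field_simps)
  also have "\<dots> \<le> (bhi + lam) / blo" using assms a by (simp add: field_simps)
  finally have "ln (exp (-x)) \<le> ln ((bhi + lam) / blo)" using assms(1,2) by (subst ln_le_cancel_iff) auto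
  then show ?thesis by simp
qed



definition E1 where
  "E1 lam \<alpha> \<rho> \<mu> \<sigma> A k j \<longleftrightarrow>
     1 / A j = beta_Sigma \<rho> \<alpha> \<mu> \<sigma> j + lam
          - (alpha_Sigma \<alpha> j *
              (\<Sum>i=1..j. lam * A (j+1) * exp (- \<alpha> i * (k i (j+1) - k i j)) / \<alpha> i))
            * (1 / A j)"

definition E2 where
  "E2 lam \<alpha> \<rho> \<mu> \<sigma> A k i j \<longleftrightarrow>
        k i j = ((beta \<rho> \<alpha> \<mu> \<sigma> i j + lam) * A j - 1) / \<alpha> i
          - lam * A (j+1) * exp (- \<alpha> i * (k i (j+1) - k i j)) / \<alpha> i"

lemma all_split_first:
  "(\<forall>j. s \<le> j \<and> j < s + Suc d \<longrightarrow> P j) \<longleftrightarrow> P s \<and> (\<forall>j. Suc s \<le> j \<and> j < Suc s + d \<longrightarrow> P j)"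
  by (metis Suc_le_eq add_Suc add_Suc_right le_eq_less_or_eq less_add_Suc1 order.refl)

lemma ls_zero:
  "lemma_system s 0 lam \<alpha> \<rho> \<mu> \<sigma> A k \<longleftrightarrow> A s = 1 / beta_Sigma \<rho> \<alpha> \<mu> \<sigma> s \<and>
     (\<forall>i\<in>{1..s}. k i s = (beta \<rho> \<alpha> \<mu> \<sigma> i s * A s - 1) / \<alpha> i)"
  by (simp add: lemma_system_def)

lemma ls_suc:
  "lemma_system s (Suc d) lam \<alpha> \<rho> \<mu> \<sigma> A k \<longleftrightarrow> lemma_system (Suc s) d lam \<alpha> \<rho> \<mu> \<sigma> A k \<and>
     E1 lam \<alpha> \<rho> \<mu> \<sigma> A k s \<and> (\<forall>i\<in>{1..s}. E2 lam \<alpha> \<rho> \<mu> \<sigma> A k i s)"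
  unfolding lemma_system_def E1_def E2_def all_split_first
  by (simp only: add_Suc add_Suc_right) blast

lemma ls_cong:
  assumes "\<And>j. j \<ge> s \<Longrightarrow> A' j = A j" "\<And>i j. j \<ge> s \<Longrightarrow> k' i j = k i j"
  shows "lemma_system s d lam \<alpha> \<rho> \<mu> \<sigma> A' k' = lemma_system s d lam \<alpha> \<rho> \<mu> \<sigma> A k"
  unfolding lemma_system_def using assms by simp

context
  fixes N0 :: nat and lam blo bhi :: real
    and \<alpha> \<rho> :: "nat \<Rightarrow> real" and \<mu> \<sigma> :: "nat \<Rightarrow> nat \<Rightarrow> real"
  assumes N0: "N0 \<ge> 1"
    and lam: "lam > 0"
    and alpha_pos: "\<And>i. i \<ge> 1 \<Longrightarrow> \<alpha> i > 0"
    and A2_pos: "0 < blo" and A2_le: "blo \<le> bhi"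
    and A2: "\<And>i j. N0 \<le> j \<Longrightarrow> 1 \<le> i \<Longrightarrow> i \<le> j \<Longrightarrow>
               blo \<le> beta \<rho> \<alpha> \<mu> \<sigma> i j \<and> beta \<rho> \<alpha> \<mu> \<sigma> i j \<le> bhi"
begin

lemma P_pos: "j \<ge> 1 \<Longrightarrow> (\<Sum>i=1..j. 1 / \<alpha> i) > 0"
  using alpha_pos by (intro sum_pos) auto

lemma betaSigma_bounds:
  assumes j: "j \<ge> N0"
  shows "blo \<le> beta_Sigma \<rho> \<alpha> \<mu> \<sigma> j \<and> beta_Sigma \<rho> \<alpha> \<mu> \<sigma> j \<le> bhi"
proof -
  let ?P = "\<Sum>i=1..j. 1 / \<alpha> i" and ?Q = "\<Sum>i=1..j. beta \<rho> \<alpha> \<mu> \<sigma> i j / \<alpha> i"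
  have P: "?P > 0" using P_pos j N0 by simp
  have "blo * ?P \<le> ?Q" unfolding sum_distrib_left
  proof (intro sum_mono)
    fix n assume n: "n \<in> {1..j}"
    then have "blo \<le> beta \<rho> \<alpha> \<mu> \<sigma> n j" using A2 j by auto
    moreover have "\<alpha> n > 0" using alpha_pos n by auto
    ultimately show "blo * (1 / \<alpha> n) \<le> beta \<rho> \<alpha> \<mu> \<sigma> n j / \<alpha> n" by (simp add: divide_right_mono)
  qed
  moreover have "?Q \<le> bhi * ?P" unfolding sum_distrib_left
  proof (intro sum_mono)
    fix n assume n: "n \<in> {1..j}"
    then have "bhi \<ge> beta \<rho> \<alpha> \<mu> \<sigma> n j" using A2 j by auto
    moreover have "\<alpha> n > 0" using alpha_pos n by auto
    ultimately show "bhi * (1 / \<alpha> n) \<ge> beta \<rho> \<alpha> \<mu> \<sigma> n j / \<alpha> n" by (simp add: divide_right_mono)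
  qed
  ultimately show ?thesis using P
    unfolding beta_Sigma_def alpha_Sigma_def by (simp add: field_simps)
qed

lemma E2_conv:
  assumes i: "i \<ge> 1"
  shows "E2 lam \<alpha> \<rho> \<mu> \<sigma> A k i j \<longleftrightarrow>
    \<alpha> i * k i j + (lam * A (j+1) * exp (- \<alpha> i * k i (j+1))) * exp (\<alpha> i * k i j)
      = (beta \<rho> \<alpha> \<mu> \<sigma> i j + lam) * A j - 1"
proof -
  have a: "\<alpha> i > 0" using alpha_pos i by simp
  have ex: "exp (- \<alpha> i * (k i (j+1) - k i j)) = exp (- \<alpha> i * k i (j+1)) * exp (\<alpha> i * k i j)"
    by (simp add: exp_add[symmetric] algebra_simps)
  have gen: "(u = v / \<alpha> i - w / \<alpha> i) \<longleftrightarrow> (\<alpha> i * u + w = v)" for u v w :: real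
    using a by (auto simp: field_simps)
  show ?thesis unfolding E2_def ex gen by (simp add: mult.assoc)
qed

lemma E1_conv:
  assumes j: "j \<ge> N0" and A: "A j > 0"
    and e2: "\<forall>i\<in>{1..j}. E2 lam \<alpha> \<rho> \<mu> \<sigma> A k i j"
  shows "E1 lam \<alpha> \<rho> \<mu> \<sigma> A k j \<longleftrightarrow> (\<Sum>i=1..j. \<alpha> i * k i j / \<alpha> i) = 0"
proof -
  let ?P = "\<Sum>i=1..j. 1 / \<alpha> i" and ?Q = "\<Sum>i=1..j. beta \<rho> \<alpha> \<mu> \<sigma> i j / \<alpha> i"
    and ?R = "\<Sum>i=1..j. \<alpha> i * k i j / \<alpha> i"
  let ?S = "\<Sum>i=1..j. lam * A (j+1) * exp (- \<alpha> i * (k i (j+1) - k i j)) / \<alpha> i"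
  have P: "?P > 0" using P_pos j N0 by simp
  have "?S = (\<Sum>i=1..j. A j * (beta \<rho> \<alpha> \<mu> \<sigma> i j / \<alpha> i) + (lam * A j - 1) * (1 / \<alpha> i)
      - \<alpha> i * k i j / \<alpha> i)"
  proof (rule sum.cong)
    fix i assume i: "i \<in> {1..j}"
    have a: "\<alpha> i > 0" using alpha_pos i by simp
    from e2 i have "k i j = ((beta \<rho> \<alpha> \<mu> \<sigma> i j + lam) * A j - 1) / \<alpha> i
          - lam * A (j+1) * exp (- \<alpha> i * (k i (j+1) - k i j)) / \<alpha> i" unfolding E2_def by blast
    then show "lam * A (j+1) * exp (- \<alpha> i * (k i (j+1) - k i j)) / \<alpha> i =
      A j * (beta \<rho> \<alpha> \<mu> \<sigma> i j / \<alpha> i) + (lam * A j - 1) * (1 / \<alpha> i) - \<alpha> i * k i j / \<alpha> i"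
      using a by (simp add: field_simps)
  qed simp
  also have "\<dots> = A j * ?Q + (lam * A j - 1) * ?P - ?R"
    by (simp add: sum.distrib sum_subtractf sum_distrib_left)
  finally have S: "?S = A j * ?Q + (lam * A j - 1) * ?P - ?R" .
  show ?thesis unfolding E1_def beta_Sigma_def alpha_Sigma_def S
    using P A by (simp add: field_simps)
qed


definition good where
  "good A k s d \<longleftrightarrow> (\<forall>j\<in>{s..s+d}. 1/(bhi+lam) < A j \<and> A j \<le> 1/blo \<and>
     (\<forall>i\<in>{1..j}. A j * exp (- \<alpha> i * k i j) \<le> 1/blo \<and> \<alpha> i * k i j \<le> (bhi + lam)/blo - 1))"

lemma bhl: "bhi + lam > 0" using A2_pos A2_le lam by linarith

lemma good_pos: "good A k s d \<Longrightarrow> j \<in> {s..s+d} \<Longrightarrow> A j > 0"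
  unfolding good_def using bhl by (meson divide_pos_pos less_trans zero_less_one)

lemma exists_sys:
  "s \<ge> N0 \<Longrightarrow> \<exists>A k. lemma_system s d lam \<alpha> \<rho> \<mu> \<sigma> A k \<and> good A k s d"
proof (induction d arbitrary: s)
  case 0
  let ?B = "beta_Sigma \<rho> \<alpha> \<mu> \<sigma> s"
  define A where "A = (\<lambda>_::nat. 1 / ?B)"
  define k where "k = (\<lambda>i (_::nat). (beta \<rho> \<alpha> \<mu> \<sigma> i s * (1 / ?B) - 1) / \<alpha> i)"
  have B: "blo \<le> ?B" "?B \<le> bhi" using betaSigma_bounds 0 by auto
  have "good A k s 0" unfolding good_def
  proof (intro ballI conjI)
    fix j assume "j \<in> {s..s+0}"
    then have j: "j = s" by simp
    show "1/(bhi+lam) < A j" unfolding A_def using B A2_pos lam by (simp add: frac_less2)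
    show "A j \<le> 1/blo" unfolding A_def using B A2_pos by (simp add: frac_le)
    fix i assume i: "i \<in> {1..j}"
    let ?b = "beta \<rho> \<alpha> \<mu> \<sigma> i s"
    have b: "blo \<le> ?b" "?b \<le> bhi" using A2[of s i] 0 i j by auto
    have a: "\<alpha> i > 0" using alpha_pos i by auto
    have ak: "\<alpha> i * k i j = ?b / ?B - 1" unfolding k_def using a by simp
    have pB: "?B > 0" using B A2_pos by linarith
    have pb: "?b / ?B > 0" using b pB A2_pos by simp
    have gen: "exp (- (y - 1)) \<le> 1 / y" if "0 < y" for y :: real
    proof -
      have "y \<le> exp (y - 1)" using exp_ge_add_one_self[of "y - 1"] by simp
      then have "inverse (exp (y - 1)) \<le> inverse y" using that by (rule le_imp_inverse_le)
      then show ?thesis by (simp only: exp_minus inverse_eq_divide)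
    qed
    have "exp (- (?b / ?B - 1)) \<le> 1 / (?b / ?B)" by (rule gen[OF pb])
    then have "1/?B * exp (- (?b / ?B - 1)) \<le> 1/?B * (1 / (?b / ?B))" using pB
      by (intro mult_left_mono) auto
    also have "\<dots> = 1 / ?b" using pB pb by (simp add: field_simps)
    also have "\<dots> \<le> 1 / blo" using b A2_pos by (simp add: frac_le)
    finally show "A j * exp (- \<alpha> i * k i j) \<le> 1/blo" unfolding A_def using ak by simp
    have "?b / ?B \<le> bhi / blo" using b B pB A2_pos by (intro frac_le) auto
    also have "\<dots> \<le> (bhi + lam) / blo" using lam A2_pos by (simp add: divide_right_mono)
    finally show "\<alpha> i * k i j \<le> (bhi + lam)/blo - 1" using ak by simp
  qed
  moreover have "lemma_system s 0 lam \<alpha> \<rho> \<mu> \<sigma> A k" unfolding ls_zero A_def k_def by simp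
  ultimately show ?case by blast
next
  case (Suc d)
  from Suc.prems have sN: "Suc s \<ge> N0" by simp
  obtain A k where sys: "lemma_system (Suc s) d lam \<alpha> \<rho> \<mu> \<sigma> A k" and gd: "good A k (Suc s) d"
    using Suc.IH[OF sN] by blast
  define c where "c i = lam * A (s+1) * exp (- \<alpha> i * k i (s+1))" for i
  have s1: "s \<ge> 1" using Suc.prems N0 by simp
  have pA1: "A (s+1) > 0" using good_pos[OF gd, of "s+1"] by simp
  have cb: "c i > 0 \<and> c i \<le> lam / blo" if i: "i \<in> {1..s}" for i
  proof
    show "c i > 0" unfolding c_def using lam pA1 by simp
    have "A (s+1) * exp (- \<alpha> i * k i (s+1)) \<le> 1/blo" using gd i unfolding good_def by auto
    then have "lam * (A (s+1) * exp (- \<alpha> i * k i (s+1))) \<le> lam * (1/blo)" using lam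
      by (intro mult_left_mono) auto
    then show "c i \<le> lam / blo" unfolding c_def by (simp add: mult.assoc)
  qed
  have btb: "blo \<le> beta \<rho> \<alpha> \<mu> \<sigma> i s \<and> beta \<rho> \<alpha> \<mu> \<sigma> i s \<le> bhi" if "i \<in> {1..s}" for i
    using A2[of s i] Suc.prems that by auto
  obtain a x where a1: "1/(bhi+lam) \<le> a" and a2: "a \<le> 1/blo"
    and ex: "\<forall>i\<in>{1..s}. x i + c i * exp (x i) = (beta \<rho> \<alpha> \<mu> \<sigma> i s + lam) * a - 1"
    and sx: "(\<Sum>i=1..s. x i / \<alpha> i) = 0"
    using step_exists[of s lam blo \<alpha> c "\<lambda>i. beta \<rho> \<alpha> \<mu> \<sigma> i s" bhi] s1 lam A2_pos alpha_pos cb btb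
    by auto
  have pa: "a > 0" using a1 bhl by (meson divide_pos_pos less_le_trans zero_less_one)
  have ab: "1/(bhi+lam) < a \<and> a \<le> 1/blo"
    using step_abound[of s lam blo a \<alpha> c "\<lambda>i. beta \<rho> \<alpha> \<mu> \<sigma> i s" bhi x] s1 lam A2_pos pa alpha_pos cb btb ex sx
    by auto
  define A' where "A' = A(s := a)"
  define k' where "k' i j = (if j = s then x i / \<alpha> i else k i j)" for i j
  have sys': "lemma_system (Suc s) d lam \<alpha> \<rho> \<mu> \<sigma> A' k'"
    using sys by (subst ls_cong[where A = A and k = k]) (auto simp: A'_def k'_def)
  have xk: "\<alpha> i * k' i s = x i" if "i \<in> {1..s}" for i
    using alpha_pos[of i] that by (simp add: k'_def)
  have ck: "lam * A' (s+1) * exp (- \<alpha> i * k' i (s+1)) = c i" for i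
    by (simp add: A'_def k'_def c_def)
  have e2: "\<forall>i\<in>{1..s}. E2 lam \<alpha> \<rho> \<mu> \<sigma> A' k' i s"
  proof
    fix i assume i: "i \<in> {1..s}"
    show "E2 lam \<alpha> \<rho> \<mu> \<sigma> A' k' i s"
      using E2_conv[of i A' k' s] i xk[OF i] ck[of i] ex by (simp add: A'_def)
  qed
  have e1: "E1 lam \<alpha> \<rho> \<mu> \<sigma> A' k' s"
  proof -
    have "(\<Sum>i=1..s. \<alpha> i * k' i s / \<alpha> i) = (\<Sum>i=1..s. x i / \<alpha> i)"
      using xk by (intro sum.cong) auto
    then show ?thesis using E1_conv[of s A' k'] Suc.prems pa e2 sx by (simp add: A'_def)
  qed
  have gd': "good A' k' s (Suc d)" unfolding good_def
  proof (intro ballI)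
    fix j assume j: "j \<in> {s..s + Suc d}"
    show "1/(bhi+lam) < A' j \<and> A' j \<le> 1/blo \<and>
     (\<forall>i\<in>{1..j}. A' j * exp (- \<alpha> i * k' i j) \<le> 1/blo \<and> \<alpha> i * k' i j \<le> (bhi + lam)/blo - 1)"
    proof (cases "j = s")
      case True
      have "A' j * exp (- \<alpha> i * k' i j) \<le> 1/blo \<and> \<alpha> i * k' i j \<le> (bhi + lam)/blo - 1"
        if i: "i \<in> {1..j}" for i
        using step_ibound[of lam blo a "c i" "beta \<rho> \<alpha> \<mu> \<sigma> i s" bhi "x i"] lam A2_pos pa a2
          cb[of i] btb[of i] ex i True xk[of i] by (simp add: A'_def)
      then show ?thesis using True ab by (simp add: A'_def)
    next
      case False
      then have "j \<in> {Suc s..Suc s + d}" using j by auto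
      then show ?thesis using gd False unfolding good_def by (simp add: A'_def k'_def)
    qed
  qed
  have "lemma_system s (Suc d) lam \<alpha> \<rho> \<mu> \<sigma> A' k'"
    unfolding ls_suc using sys' e1 e2 by blast
  then show ?case using gd' by (intro exI[of _ A'] exI[of _ k'] conjI)
qed

lemma unique_sys:
  "s \<ge> N0 \<Longrightarrow> lemma_system s d lam \<alpha> \<rho> \<mu> \<sigma> A k \<Longrightarrow> lemma_system s d lam \<alpha> \<rho> \<mu> \<sigma> A' k' \<Longrightarrow>
   \<forall>j\<in>{s..s+d}. A j > 0 \<Longrightarrow> \<forall>j\<in>{s..s+d}. A' j > 0 \<Longrightarrow>
   \<forall>j\<in>{s..s+d}. A' j = A j \<and> (\<forall>i\<in>{1..j}. k' i j = k i j)"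
proof (induction d arbitrary: s)
  case 0
  then show ?case by (simp add: ls_zero)
next
  case (Suc d)
  from Suc.prems have sN: "Suc s \<ge> N0" by simp
  have s1: "s \<ge> 1" using Suc.prems N0 by simp
  have IH: "\<forall>j\<in>{Suc s..Suc s+d}. A' j = A j \<and> (\<forall>i\<in>{1..j}. k' i j = k i j)"
  proof -
    have L: "lemma_system (Suc s) d lam \<alpha> \<rho> \<mu> \<sigma> A k" "lemma_system (Suc s) d lam \<alpha> \<rho> \<mu> \<sigma> A' k'"
      using Suc.prems(2,3) unfolding ls_suc by blast+
    have P: "\<forall>j\<in>{Suc s..Suc s+d}. A j > 0" "\<forall>j\<in>{Suc s..Suc s+d}. A' j > 0"
      using Suc.prems(4,5) by auto
    show ?thesis using Suc.IH[OF sN L P] .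
  qed
  have e: "E1 lam \<alpha> \<rho> \<mu> \<sigma> A k s" "\<forall>i\<in>{1..s}. E2 lam \<alpha> \<rho> \<mu> \<sigma> A k i s"
    "E1 lam \<alpha> \<rho> \<mu> \<sigma> A' k' s" "\<forall>i\<in>{1..s}. E2 lam \<alpha> \<rho> \<mu> \<sigma> A' k' i s"
    using Suc.prems(2,3) unfolding ls_suc by blast+
  define c where "c i = lam * A (s+1) * exp (- \<alpha> i * k i (s+1))" for i
  have A1: "A' (s+1) = A (s+1)" using IH by auto
  have k1: "k' i (s+1) = k i (s+1)" if "i \<in> {1..s}" for i using IH that by auto
  have pA1: "A (s+1) > 0" using Suc.prems(4) by auto
  have pA: "A s > 0" "A' s > 0" using Suc.prems(4,5) by auto
  have c': "lam * A' (s+1) * exp (- \<alpha> i * k' i (s+1)) = c i" if "i \<in> {1..s}" for i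
    using A1 k1[OF that] by (simp add: c_def)
  have U: "A s = A' s \<and> (\<forall>i\<in>{1..s}. \<alpha> i * k i s = \<alpha> i * k' i s)"
  proof (rule step_unique[where al = \<alpha> and c = c and bt = "\<lambda>i. beta \<rho> \<alpha> \<mu> \<sigma> i s" and lam = lam])
    show "1 \<le> s" by (rule s1)
    show "\<And>i. i \<in> {1..s} \<Longrightarrow> 0 < \<alpha> i" using alpha_pos by auto
    show "\<And>i. i \<in> {1..s} \<Longrightarrow> 0 < c i" unfolding c_def using lam pA1 by simp
    show "0 < beta \<rho> \<alpha> \<mu> \<sigma> i s + lam" if i: "i \<in> {1..s}" for i
    proof -
      have "blo \<le> beta \<rho> \<alpha> \<mu> \<sigma> i s" using A2[of s i] Suc.prems(1) i by auto
      then show ?thesis using A2_pos lam by linarith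
    qed
    show "\<alpha> i * k i s + c i * exp (\<alpha> i * k i s) = (beta \<rho> \<alpha> \<mu> \<sigma> i s + lam) * A s - 1"
      if i: "i \<in> {1..s}" for i
    proof -
      have "E2 lam \<alpha> \<rho> \<mu> \<sigma> A k i s" using e(2) i by blast
      moreover have "i \<ge> 1" using i by simp
      ultimately show ?thesis using E2_conv[of i A k s] unfolding c_def by simp
    qed
    show "\<alpha> i * k' i s + c i * exp (\<alpha> i * k' i s) = (beta \<rho> \<alpha> \<mu> \<sigma> i s + lam) * A' s - 1"
      if i: "i \<in> {1..s}" for i
    proof -
      have "E2 lam \<alpha> \<rho> \<mu> \<sigma> A' k' i s" using e(4) i by blast
      moreover have "i \<ge> 1" using i by simp
      ultimately show ?thesis using E2_conv[of i A' k' s] c'[OF i] by simp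
    qed
    show "(\<Sum>i=1..s. \<alpha> i * k i s / \<alpha> i) = 0"
      using E1_conv[OF Suc.prems(1) pA(1) e(2)] e(1) by simp
    show "(\<Sum>i=1..s. \<alpha> i * k' i s / \<alpha> i) = 0"
      using E1_conv[OF Suc.prems(1) pA(2) e(4)] e(3) by simp
  qed
  have "k' i s = k i s" if "i \<in> {1..s}" for i
  proof -
    have "\<alpha> i * k i s = \<alpha> i * k' i s" using U that by blast
    moreover have "\<alpha> i > 0" using alpha_pos that by auto
    ultimately show ?thesis by simp
  qed
  then show ?case
  proof (intro ballI)
    fix j assume j: "j \<in> {s..s + Suc d}"
    show "A' j = A j \<and> (\<forall>i\<in>{1..j}. k' i j = k i j)"
    proof (cases "j = s")
      case True
      then show ?thesis using U \<open>\<And>i. i \<in> {1..s} \<Longrightarrow> k' i s = k i s\<close> by simp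
    next
      case False
      then have "j \<in> {Suc s..Suc s+d}" using j by auto
      then show ?thesis using IH by blast
    qed
  qed
qed


lemma main_result:
  shows "\<exists>A k.
     lemma_system N0 m lam \<alpha> \<rho> \<mu> \<sigma> A k \<and>
     (\<forall>j\<in>{N0..N0+m}. A j > 0) \<and>
     (\<forall>A' k'. lemma_system N0 m lam \<alpha> \<rho> \<mu> \<sigma> A' k' \<and> (\<forall>j\<in>{N0..N0+m}. A' j > 0) \<longrightarrow>
        (\<forall>j\<in>{N0..N0+m}. A' j = A j \<and> (\<forall>i\<in>{1..j}. k' i j = k i j))) \<and>
     (\<forall>j\<in>{N0..N0+m}. \<forall>i\<in>{1..j}.
        1 / (bhi + lam) < A j \<and> A j \<le> 1 / blo \<and>
        A j * exp (- \<alpha> i * k i j) \<le> 1 / blo \<and>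
        - ln ((bhi + lam) / blo) \<le> \<alpha> i * k i j \<and>
        \<alpha> i * k i j \<le> (bhi + lam) / blo - 1)"
proof -
  obtain A k where sys: "lemma_system N0 m lam \<alpha> \<rho> \<mu> \<sigma> A k" and gd: "good A k N0 m"
    using exists_sys[of N0 m] by blast
  have pos: "\<forall>j\<in>{N0..N0+m}. A j > 0" using good_pos[OF gd] by blast
  have uq: "\<forall>A' k'. lemma_system N0 m lam \<alpha> \<rho> \<mu> \<sigma> A' k' \<and> (\<forall>j\<in>{N0..N0+m}. A' j > 0) \<longrightarrow>
        (\<forall>j\<in>{N0..N0+m}. A' j = A j \<and> (\<forall>i\<in>{1..j}. k' i j = k i j))"
  proof (intro allI impI)
    fix A' k' assume h: "lemma_system N0 m lam \<alpha> \<rho> \<mu> \<sigma> A' k' \<and> (\<forall>j\<in>{N0..N0+m}. A' j > 0)"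
    show "\<forall>j\<in>{N0..N0+m}. A' j = A j \<and> (\<forall>i\<in>{1..j}. k' i j = k i j)"
      using unique_sys[OF order.refl sys conjunct1[OF h] pos conjunct2[OF h]] .
  qed
  have bd: "\<forall>j\<in>{N0..N0+m}. \<forall>i\<in>{1..j}.
        1 / (bhi + lam) < A j \<and> A j \<le> 1 / blo \<and>
        A j * exp (- \<alpha> i * k i j) \<le> 1 / blo \<and>
        - ln ((bhi + lam) / blo) \<le> \<alpha> i * k i j \<and>
        \<alpha> i * k i j \<le> (bhi + lam) / blo - 1"
  proof (intro ballI)
    fix j i assume j: "j \<in> {N0..N0+m}" and i: "i \<in> {1..j}"
    have g: "1/(bhi+lam) < A j" "A j \<le> 1/blo" "A j * exp (- \<alpha> i * k i j) \<le> 1/blo"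
      "\<alpha> i * k i j \<le> (bhi + lam)/blo - 1" using gd j i unfolding good_def by auto
    have "- ln ((bhi + lam) / blo) \<le> \<alpha> i * k i j"
      using final_bound[OF bhl A2_pos g(1)] g(3) by simp
    then show "1 / (bhi + lam) < A j \<and> A j \<le> 1 / blo \<and>
        A j * exp (- \<alpha> i * k i j) \<le> 1 / blo \<and>
        - ln ((bhi + lam) / blo) \<le> \<alpha> i * k i j \<and>
        \<alpha> i * k i j \<le> (bhi + lam) / blo - 1" using g by simp
  qed
  show ?thesis by (intro exI[of _ A] exI[of _ k] conjI sys pos uq bd)
qed

end

theorem lemma3p4:
  fixes N0 m :: nat and lam blo bhi :: real
    and \<alpha> \<rho> :: "nat \<Rightarrow> real" and \<mu> \<sigma> :: "nat \<Rightarrow> nat \<Rightarrow> real"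
  assumes N0: "N0 \<ge> 1"
    and lam: "lam > 0"
    and alpha_pos: "\<And>i. i \<ge> 1 \<Longrightarrow> \<alpha> i > 0"
    and rho_pos: "\<And>i. i \<ge> 1 \<Longrightarrow> \<rho> i > 0"
    and A1_mu: "\<And>i. i \<ge> 1 \<Longrightarrow> \<exists>B. \<forall>j\<ge>max N0 i. \<bar>\<mu> i j\<bar> \<le> B"
    and A1_sigma: "\<And>i. i \<ge> 1 \<Longrightarrow> \<exists>B. \<forall>j\<ge>max N0 i. \<bar>\<sigma> i j\<bar> \<le> B"
    and A2_pos: "0 < blo" and A2_le: "blo \<le> bhi"
    and A2: "\<And>i j. N0 \<le> j \<Longrightarrow> 1 \<le> i \<Longrightarrow> i \<le> j \<Longrightarrow>
               blo \<le> beta \<rho> \<alpha> \<mu> \<sigma> i j \<and> beta \<rho> \<alpha> \<mu> \<sigma> i j \<le> bhi"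
  shows "\<exists>A k.
     lemma_system N0 m lam \<alpha> \<rho> \<mu> \<sigma> A k \<and>
     (\<forall>j\<in>{N0..N0+m}. A j > 0) \<and>
     (\<forall>A' k'. lemma_system N0 m lam \<alpha> \<rho> \<mu> \<sigma> A' k' \<and> (\<forall>j\<in>{N0..N0+m}. A' j > 0) \<longrightarrow>
        (\<forall>j\<in>{N0..N0+m}. A' j = A j \<and> (\<forall>i\<in>{1..j}. k' i j = k i j))) \<and>
     (\<forall>j\<in>{N0..N0+m}. \<forall>i\<in>{1..j}.
        1 / (bhi + lam) < A j \<and> A j \<le> 1 / blo \<and>
        A j * exp (- \<alpha> i * k i j) \<le> 1 / blo \<and>
        - ln ((bhi + lam) / blo) \<le> \<alpha> i * k i j \<and>
        \<alpha> i * k i j \<le> (bhi + lam) / blo - 1)"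
  using main_result[OF N0 lam alpha_pos A2_pos A2_le A2] by blast

end
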